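(* Let $n\ge2$, let $r_1,r_2>0$ and let $u,v\in S^{n-1}$ be such that $u$ is not parallel to $v$. Then $C^{-}(u,r_1)\cap C^{-}(v,r_2)\in\mathcal{C}_e^n$.
   Context: For $x,y\in\mathbb{R}^n$ let $[x,y]=\sqrt{|x|^2|y|^2-(x\cdot y)^2}$. For $u\in S^{n-1}$ and $r>0$, the closed solid cylinder with axis $\{tu:t\in\mathbb{R}\}$ and base radius $r$ is $C^{-}(u,r)=\{x\in\mathbb{R}^n: [x,u]\le r\}$. A convex body is a compact convex set with nonempty interior. $\mathcal{C}_e^n$ denotes the class of origin-symmetric convex bodies in $\mathbb{R}^n$ that are intersections of (a family of) closed solid cylinders $C^{-}(u,r)$, $u\in S^{n-1}$, $r>0$. *)

theory Defs
  imports "HOL-Analysis.Analysis"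
begin

definition bracket :: "real^'n \<Rightarrow> real^'n \<Rightarrow> real" where
  "bracket x y = sqrt ((norm x)\<^sup>2 * (norm y)\<^sup>2 - (x \<bullet> y)\<^sup>2)"

definition cyl :: "real^'n \<Rightarrow> real \<Rightarrow> (real^'n) set" where
  "cyl u r = {x. bracket x u \<le> r}"

definition convex_body :: "(real^'n) set \<Rightarrow> bool" where
  "convex_body K \<longleftrightarrow> compact K \<and> convex K \<and> interior K \<noteq> {}"

definition origin_symmetric :: "(real^'n) set \<Rightarrow> bool" where
  "origin_symmetric K \<longleftrightarrow> (\<forall>x\<in>K. - x \<in> K)"

definition cyl_class :: "(real^'n) set set" where
  "cyl_class = {K. convex_body K \<and> origin_symmetric K \<and>
     (\<exists>F. F \<subseteq> {(u, r). norm u = 1 \<and> r > 0} \<and> K = (\<Inter>(u, r)\<in>F. cyl u r))}"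

end

theory Submission
  imports Defs
begin

lemma bracket_unit:
  fixes x u :: "real^'n"
  assumes "norm u = 1"
  shows "bracket x u = norm (x - (x \<bullet> u) *\<^sub>R u)"
proof -
  have uu: "u \<bullet> u = 1" using assms by (simp add: norm_eq_1)
  have "(norm (x - (x \<bullet> u) *\<^sub>R u))\<^sup>2 = (norm x)\<^sup>2 - (x \<bullet> u)\<^sup>2"
    unfolding power2_norm_eq_inner
    by (simp add: inner_diff_left inner_diff_right uu inner_commute power2_eq_square)
  then have "sqrt ((norm x)\<^sup>2 * (norm u)\<^sup>2 - (x \<bullet> u)\<^sup>2) = sqrt ((norm (x - (x \<bullet> u) *\<^sub>R u))\<^sup>2)"
    using assms by simp
  then show ?thesis unfolding bracket_def by simp
qed

lemma cyl_unit:
  fixes u :: "real^'n"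
  assumes "norm u = 1"
  shows "cyl u r = {x. norm (x - (x \<bullet> u) *\<^sub>R u) \<le> r}"
  unfolding cyl_def using bracket_unit[OF assms] by simp

lemma cyl_convex:
  fixes u :: "real^'n"
  assumes "norm u = 1"
  shows "convex (cyl u r)"
  unfolding cyl_unit[OF assms] convex_def
proof (intro allI impI ballI, goal_cases)
  case (1 x y a b)
  have eq: "(a *\<^sub>R x + b *\<^sub>R y) - ((a *\<^sub>R x + b *\<^sub>R y) \<bullet> u) *\<^sub>R u
      = a *\<^sub>R (x - (x \<bullet> u) *\<^sub>R u) + b *\<^sub>R (y - (y \<bullet> u) *\<^sub>R u)"
    by (simp add: inner_add_left algebra_simps)
  have "norm (a *\<^sub>R (x - (x \<bullet> u) *\<^sub>R u) + b *\<^sub>R (y - (y \<bullet> u) *\<^sub>R u))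
     \<le> a * norm (x - (x \<bullet> u) *\<^sub>R u) + b * norm (y - (y \<bullet> u) *\<^sub>R u)"
    using 1 norm_triangle_ineq[of "a *\<^sub>R (x - (x \<bullet> u) *\<^sub>R u)" "b *\<^sub>R (y - (y \<bullet> u) *\<^sub>R u)"] by simp
  also have "\<dots> \<le> a * r + b * r"
    using 1 by (intro add_mono mult_left_mono) auto
  also have "\<dots> = r" using 1 by (metis distrib_right mult_1)
  finally show ?case using eq by simp
qed

lemma cyl_closed:
  fixes u :: "real^'n"
  assumes "norm u = 1"
  shows "closed (cyl u r)"
  unfolding cyl_unit[OF assms]
  by (intro closed_Collect_le continuous_intros)

lemma cyl_sym:
  fixes u :: "real^'n"
  assumes "norm u = 1" "x \<in> cyl u r"
  shows "- x \<in> cyl u r"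
proof -
  have "- x - (- x \<bullet> u) *\<^sub>R u = - (x - (x \<bullet> u) *\<^sub>R u)" by simp
  then show ?thesis using assms unfolding cyl_unit[OF assms(1)] by (simp only: mem_Collect_eq norm_minus_cancel)
qed

lemma cyl_ball:
  fixes u :: "real^'n"
  assumes "norm u = 1" "norm x \<le> r"
  shows "x \<in> cyl u r"
proof -
  have "(norm x)\<^sup>2 * (norm u)\<^sup>2 - (x \<bullet> u)\<^sup>2 \<le> (norm x)\<^sup>2"
    using assms(1) by simp
  then have "bracket x u \<le> sqrt ((norm x)\<^sup>2)"
    unfolding bracket_def by (rule real_sqrt_le_mono)
  then have "bracket x u \<le> norm x" by simp
  then show ?thesis using assms unfolding cyl_def by simp
qed

lemma abs_inner_lt1:
  fixes u v :: "real^'n"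
  assumes "norm u = 1" "norm v = 1" "v \<noteq> u" "v \<noteq> - u"
  shows "\<bar>u \<bullet> v\<bar> < 1"
proof -
  have le: "\<bar>u \<bullet> v\<bar> \<le> 1" using Cauchy_Schwarz_ineq2[of u v] assms by simp
  have "\<bar>u \<bullet> v\<bar> \<noteq> 1"
  proof
    assume "\<bar>u \<bullet> v\<bar> = 1"
    then have "\<bar>u \<bullet> v\<bar> = norm u * norm v" using assms by simp
    then have "norm u *\<^sub>R v = norm v *\<^sub>R u \<or> norm u *\<^sub>R v = - norm v *\<^sub>R u"
      by (simp add: norm_cauchy_schwarz_abs_eq)
    then show False using assms by simp
  qed
  then show ?thesis using le by simp
qed

lemma inter_bounded:
  fixes u v :: "real^'n"
  assumes "norm u = 1" "norm v = 1" "v \<noteq> u" "v \<noteq> - u" "r1 > 0" "r2 > 0"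
  shows "bounded (cyl u r1 \<inter> cyl v r2)"
proof -
  define c where "c = u \<bullet> v"
  have c1: "\<bar>c\<bar> < 1" unfolding c_def using abs_inner_lt1[OF assms(1-4)] .
  define R where "R = r1 + r2"
  define M where "M = sqrt (R\<^sup>2 / (1 - \<bar>c\<bar>))"
  have uu: "u \<bullet> u = 1" using assms by (simp add: norm_eq_1)
  have vv: "v \<bullet> v = 1" using assms by (simp add: norm_eq_1)
  have "cyl u r1 \<inter> cyl v r2 \<subseteq> cball 0 (r1 + M)"
  proof
    fix x assume x: "x \<in> cyl u r1 \<inter> cyl v r2"
    define a where "a = x \<bullet> u"
    define b where "b = x \<bullet> v"
    have p: "norm (x - a *\<^sub>R u) \<le> r1" using x unfolding a_def cyl_unit[OF assms(1)] by simp
    have q: "norm (x - b *\<^sub>R v) \<le> r2" using x unfolding b_def cyl_unit[OF assms(2)] by simp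
    have "a *\<^sub>R u - b *\<^sub>R v = (x - b *\<^sub>R v) - (x - a *\<^sub>R u)" by simp
    then have "norm (a *\<^sub>R u - b *\<^sub>R v) \<le> R"
      using p q norm_triangle_ineq4[of "x - b *\<^sub>R v" "x - a *\<^sub>R u"] unfolding R_def by simp
    then have n2: "(norm (a *\<^sub>R u - b *\<^sub>R v))\<^sup>2 \<le> R\<^sup>2"
      by (simp add: power_mono)
    have e: "(norm (a *\<^sub>R u - b *\<^sub>R v))\<^sup>2 = a\<^sup>2 + b\<^sup>2 - 2 * a * b * c"
      unfolding power2_norm_eq_inner c_def
      by (simp add: inner_diff_left inner_diff_right uu vv inner_commute power2_eq_square algebra_simps)
    have "2 * a * b * c \<le> \<bar>2 * a * b * c\<bar>" by (rule abs_ge_self)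
    also have "\<dots> = (2 * \<bar>a\<bar> * \<bar>b\<bar>) * \<bar>c\<bar>" by (simp add: abs_mult)
    also have "\<dots> \<le> (a\<^sup>2 + b\<^sup>2) * \<bar>c\<bar>"
    proof (rule mult_right_mono)
      have "0 \<le> (\<bar>a\<bar> - \<bar>b\<bar>)\<^sup>2" by simp
      then show "2 * \<bar>a\<bar> * \<bar>b\<bar> \<le> a\<^sup>2 + b\<^sup>2" by (simp add: power2_diff power2_abs)
    qed simp
    finally have h1: "2 * a * b * c \<le> (a\<^sup>2 + b\<^sup>2) * \<bar>c\<bar>" .
    have h2: "(1 - \<bar>c\<bar>) * b\<^sup>2 \<ge> 0" using c1 by simp
    have h3: "(1 - \<bar>c\<bar>) * a\<^sup>2 + (1 - \<bar>c\<bar>) * b\<^sup>2 = a\<^sup>2 + b\<^sup>2 - (a\<^sup>2 + b\<^sup>2) * \<bar>c\<bar>"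
      by (simp add: algebra_simps)
    have "(1 - \<bar>c\<bar>) * a\<^sup>2 \<le> R\<^sup>2"
      using n2 e h1 h2 h3 by linarith
    then have "a\<^sup>2 \<le> R\<^sup>2 / (1 - \<bar>c\<bar>)" using c1 by (simp add: field_simps)
    then have "sqrt (a\<^sup>2) \<le> M" unfolding M_def by (rule real_sqrt_le_mono)
    then have aM: "\<bar>a\<bar> \<le> M" by simp
    have "norm x \<le> norm (x - a *\<^sub>R u) + norm (a *\<^sub>R u)"
      by (metis norm_triangle_sub add.commute)
    also have "\<dots> \<le> r1 + M" using p aM assms(1) by simp
    finally show "x \<in> cball 0 (r1 + M)" by simp
  qed
  then show ?thesis using bounded_cball bounded_subset by blast
qed

theorem proposition3p2:
  fixes u v :: "real^'n" and r1 r2 :: real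
  assumes "CARD('n) \<ge> 2"
    and "r1 > 0" and "r2 > 0"
    and "norm u = 1" and "norm v = 1"
    and "v \<noteq> u" and "v \<noteq> - u"
  shows "cyl u r1 \<inter> cyl v r2 \<in> cyl_class"
proof -
  let ?K = "cyl u r1 \<inter> cyl v r2"
  have cpt: "compact ?K"
    using inter_bounded[OF assms(4-7,2,3)] cyl_closed[OF assms(4)] cyl_closed[OF assms(5)]
    by (simp add: compact_eq_bounded_closed closed_Int)
  have cvx: "convex ?K" using cyl_convex[OF assms(4)] cyl_convex[OF assms(5)] by (rule convex_Int)
  have "ball 0 (min r1 r2) \<subseteq> ?K"
    using cyl_ball[OF assms(4)] cyl_ball[OF assms(5)] by auto
  then have "ball 0 (min r1 r2) \<subseteq> interior ?K" by (simp add: interior_maximal)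
  moreover have "(0::real^'n) \<in> ball 0 (min r1 r2)" using assms by simp
  ultimately have int: "interior ?K \<noteq> {}" by blast
  have sym: "origin_symmetric ?K"
    unfolding origin_symmetric_def using cyl_sym[OF assms(4)] cyl_sym[OF assms(5)] by blast
  have F: "{(u, r1), (v, r2)} \<subseteq> {(u, r). norm u = 1 \<and> r > 0} \<and> ?K = (\<Inter>(u, r)\<in>{(u, r1), (v, r2)}. cyl u r)"
    using assms by auto
  show ?thesis unfolding cyl_class_def convex_body_def
    using cpt cvx int sym F by blast
qed

end
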